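(* Let $\Phi$ be the Couch–Torrence inversion, given in Schwarzschild-like coordinates by $\Phi(t,r,\omega)=\left(t,\frac{rM}{r-M},\omega\right)$. (i) (Exterior.) $\Phi$ is a diffeomorphism of $\mathrm{Ext}$ onto itself with $\Phi\circ\Phi=\mathrm{id}$. It satisfies $\Phi^*g=\frac{M^2}{(r-M)^2}\,g$, and it is an isometry of the rescaled metric: $\Phi^*\hat g=\hat g$, where $\hat g=r^{-2}g$. Every point of the photon sphere $\{r=2M\}$ is fixed by $\Phi$. In the outgoing chart of the starting point and the ingoing chart of the image point, $\Phi$ reads $(u,R,\omega)\mapsto(v',R',\omega')=\left(u,\frac{1-MR}{M},\omega\right)$. Consequently $\Phi$ extends to the conformal boundary and exchanges the future horizon $\mathscr H^+$ with future null infinity $\mathscr I^+$. Likewise it exchanges the past horizon $\mathscr H^-$ with past null infinity $\mathscr I^-$. (ii) (Interior.) Let $\mathrm{Int}$ be the interior region $0<r<M$, written in outgoing Eddington–Finkelstein coordinates $(u,r,\omega)\in\mathbb R\times(0,M)\times S^2$ with metric $g=F(r)\,du^2+2\,du\,dr-r^2d\omega^2$. Let $\mathcal N=\mathbb R_v\times(-\infty,0)_r\times S^2$ carry the metric $g_{\mathcal N}=F(r)\,dv^2+2\,dv\,dr-r^2d\omega^2$. Define the map $\Phi:\mathrm{Int}\to\mathcal N$ by $(u,r,\omega)\mapsto\left(u+2r_*(r),\frac{rM}{r-M},\omega\right)$. Then: - $\Phi$ is a diffeomorphism onto $\mathcal N$; - $\Phi^*g_{\mathcal N}=\frac{M^2}{(r-M)^2}g$;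 - $\Phi^*(r^{-2}g_{\mathcal N})=r^{-2}g$, where on each side $r$ denotes the respective radial coordinate. Under the change of coordinate $r'=-r\in(0,\infty)$, $g_{\mathcal N}$ becomes $\left(1+\frac{M}{r'}\right)^2dv^2-2\,dv\,dr'-r'^2d\omega^2$. This is the extreme Reissner–Nordström metric with mass $-M$ and charge $\pm M$ in ingoing Eddington–Finkelstein form. Under $\Phi$, the singularity $r\to0^+$ of $\mathrm{Int}$ corresponds to the singularity $r'\to0^+$ of $\mathcal N$, and the horizon $r\to M^-$ corresponds to the infinity $r'\to+\infty$ of $\mathcal N$.
   Context: Fix $M>0$ and let $F(r)=(1-M/r)^2$. The exterior of the extreme Reissner–Nordström black hole is $\mathrm{Ext}=\mathbb R_t\times(M,\infty)_r\times S^2_\omega$ with metric $g=F(r)\,dt^2-F(r)^{-1}dr^2-r^2d\omega^2$, where $d\omega^2$ is the round metric of the unit sphere. The Regge–Wheeler coordinate is $r_*=r-M+2M\log\frac{|r-M|}{M}-\frac{M^2}{r-M}$ (defined for $r\neq M$). On $(M,\infty)$ one has $dr_*/dr=1/F$ and $r_*(2M)=0$. Put $u=t-r_*$, $v=t+r_*$, $R=1/r$. The rescaled metric $\hat g=R^2g$ reads - $\hat g=R^2(1-MR)^2du^2-2\,du\,dR-d\omega^2$ in the outgoing chart $(u,R,\omega)$; - $\hat g=R^2(1-MR)^2dv^2+2\,dv\,dR-d\omega^2$ in the ingoing chart $(v,R,\omega)$. In the outgoing chart, $\hat g$ extends smoothly to $R=0$, defining future null infinity $\mathscr I^+=\{R=0\}$,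 and to $R=1/M$, defining the past horizon $\mathscr H^-$. In the ingoing chart, $\{R=0\}$ is past null infinity $\mathscr I^-$ and $\{R=1/M\}$ is the future horizon $\mathscr H^+$. The time orientation is the one for which $\partial_t$ is future-directed. *)

theory Defs
  imports "HOL-Analysis.Analysis"
begin

text \<open>Points of R x R x R^3; the angular variable omega lives on the unit sphere S2 in R^3.
  Tangent vectors at a point p are triples (a, b, xi) with xi orthogonal to the angular part of p.\<close>

type_synonym pt = "real \<times> real \<times> (real^3)"

definition S2 :: "(real^3) set" where "S2 = sphere 0 1"

definition rad :: "pt \<Rightarrow> real" where "rad p = fst (snd p)"
definition ang :: "pt \<Rightarrow> real^3" where "ang p = snd (snd p)"

definition Tan :: "pt \<Rightarrow> pt set" where
  "Tan p = {X. ang X \<bullet> ang p = 0}"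

primrec Ck :: "nat \<Rightarrow> 'a::real_normed_vector set \<Rightarrow> ('a \<Rightarrow> 'b::real_normed_vector) \<Rightarrow> bool" where
  "Ck 0 S f = continuous_on S f"
| "Ck (Suc n) S f = ((\<forall>x\<in>S. f differentiable (at x)) \<and>
                       (\<forall>v. Ck n S (\<lambda>x. frechet_derivative f (at x) v)))"

definition smooth_on :: "'a::real_normed_vector set \<Rightarrow> ('a \<Rightarrow> 'b::real_normed_vector) \<Rightarrow> bool" where
  "smooth_on U f = (\<forall>n. Ck n U f)"

definition smooth_map_on :: "'a::real_normed_vector set \<Rightarrow> ('a \<Rightarrow> 'b::real_normed_vector) \<Rightarrow> bool" where
  "smooth_map_on S f = (\<exists>U F. open U \<and> S \<subseteq> U \<and> smooth_on U F \<and> (\<forall>x\<in>S. F x = f x))"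

definition diffeo :: "'a::real_normed_vector set \<Rightarrow> 'b::real_normed_vector set \<Rightarrow> ('a \<Rightarrow> 'b) \<Rightarrow> bool" where
  "diffeo S T f = (bij_betw f S T \<and> smooth_map_on S f \<and> smooth_map_on T (inv_into S f))"

text \<open>Metrics: g p X Y is the value of the (0,2)-tensor at p on tangent vectors X, Y.\<close>

type_synonym metric = "pt \<Rightarrow> pt \<Rightarrow> pt \<Rightarrow> real"

definition pullback :: "(pt \<Rightarrow> pt) \<Rightarrow> metric \<Rightarrow> metric" where
  "pullback \<Phi> g p X Y = g (\<Phi> p) (frechet_derivative \<Phi> (at p) X) (frechet_derivative \<Phi> (at p) Y)"

definition metric_eq_on :: "pt set \<Rightarrow> metric \<Rightarrow> metric \<Rightarrow> bool" where
  "metric_eq_on S g h = (\<forall>p\<in>S. \<forall>X\<in>Tan p. \<forall>Y\<in>Tan p. g p X Y = h p X Y)"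

definition rescale :: "metric \<Rightarrow> metric" where
  "rescale g p X Y = g p X Y / (rad p)\<^sup>2"

definition F :: "real \<Rightarrow> real \<Rightarrow> real" where "F M r = (1 - M / r)\<^sup>2"

definition rstar :: "real \<Rightarrow> real \<Rightarrow> real" where
  "rstar M r = r - M + 2 * M * ln (\<bar>r - M\<bar> / M) - M\<^sup>2 / (r - M)"

definition Ext :: "real \<Rightarrow> pt set" where
  "Ext M = {p. M < rad p \<and> ang p \<in> S2}"

definition g_Ext :: "real \<Rightarrow> metric" where
  "g_Ext M p X Y = F M (rad p) * fst X * fst Y - rad X * rad Y / F M (rad p)
                   - (rad p)\<^sup>2 * (ang X \<bullet> ang Y)"

definition Phi_Ext :: "real \<Rightarrow> pt \<Rightarrow> pt" where
  "Phi_Ext M p = (fst p, rad p * M / (rad p - M), ang p)"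

definition to_out :: "real \<Rightarrow> pt \<Rightarrow> pt" where
  "to_out M p = (fst p - rstar M (rad p), 1 / rad p, ang p)"
definition to_in :: "real \<Rightarrow> pt \<Rightarrow> pt" where
  "to_in M p = (fst p + rstar M (rad p), 1 / rad p, ang p)"

definition Cpt :: "real \<Rightarrow> pt set" where
  "Cpt M = {p. 0 \<le> rad p \<and> rad p \<le> 1 / M \<and> ang p \<in> S2}"

definition ghat_out :: "real \<Rightarrow> metric" where
  "ghat_out M p X Y = (rad p)\<^sup>2 * (1 - M * rad p)\<^sup>2 * fst X * fst Y
                      - (fst X * rad Y + rad X * fst Y) - ang X \<bullet> ang Y"
definition ghat_in :: "real \<Rightarrow> metric" where
  "ghat_in M p X Y = (rad p)\<^sup>2 * (1 - M * rad p)\<^sup>2 * fst X * fst Y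
                      + (fst X * rad Y + rad X * fst Y) - ang X \<bullet> ang Y"

text \<open>R = 0: scri^+ in the outgoing chart, scri^- in the ingoing chart.
      R = 1/M: past horizon H^- in the outgoing chart, future horizon H^+ in the ingoing chart.\<close>
definition scri_plus :: "real \<Rightarrow> pt set" where "scri_plus M = {p. rad p = 0 \<and> ang p \<in> S2}"
definition scri_minus :: "real \<Rightarrow> pt set" where "scri_minus M = {p. rad p = 0 \<and> ang p \<in> S2}"
definition hor_minus :: "real \<Rightarrow> pt set" where "hor_minus M = {p. rad p = 1 / M \<and> ang p \<in> S2}"
definition hor_plus :: "real \<Rightarrow> pt set" where "hor_plus M = {p. rad p = 1 / M \<and> ang p \<in> S2}"

definition Phi_hat :: "real \<Rightarrow> pt \<Rightarrow> pt" where
  "Phi_hat M p = (fst p, (1 - M * rad p) / M, ang p)"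

definition IntR :: "real \<Rightarrow> pt set" where
  "IntR M = {p. 0 < rad p \<and> rad p < M \<and> ang p \<in> S2}"
definition NR :: "pt set" where
  "NR = {p. rad p < 0 \<and> ang p \<in> S2}"

definition g_EF :: "real \<Rightarrow> metric" where
  "g_EF M p X Y = F M (rad p) * fst X * fst Y + (fst X * rad Y + rad X * fst Y)
                  - (rad p)\<^sup>2 * (ang X \<bullet> ang Y)"

abbreviation g_Int :: "real \<Rightarrow> metric" where "g_Int M \<equiv> g_EF M"
abbreviation g_N :: "real \<Rightarrow> metric" where "g_N M \<equiv> g_EF M"

definition Phi_Int :: "real \<Rightarrow> pt \<Rightarrow> pt" where
  "Phi_Int M p = (fst p + 2 * rstar M (rad p), rad p * M / (rad p - M), ang p)"

definition flip :: "pt \<Rightarrow> pt" where "flip p = (fst p, - rad p, ang p)"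
definition Npos :: "pt set" where "Npos = {p. 0 < rad p \<and> ang p \<in> S2}"

definition g_Nflip :: "real \<Rightarrow> metric" where
  "g_Nflip M p X Y = (1 + M / rad p)\<^sup>2 * fst X * fst Y - (fst X * rad Y + rad X * fst Y)
                     - (rad p)\<^sup>2 * (ang X \<bullet> ang Y)"

definition g_RN_in :: "real \<Rightarrow> real \<Rightarrow> metric" where
  "g_RN_in m q p X Y = (1 - 2 * m / rad p + q\<^sup>2 / (rad p)\<^sup>2) * fst X * fst Y
                       - (fst X * rad Y + rad X * fst Y) - (rad p)\<^sup>2 * (ang X \<bullet> ang Y)"

end

theory Submission
  imports Defs "HOL-Computational_Algebra.Polynomial"
begin


lemma Ck_cong:
  assumes "open U" shows "\<And>f g. (\<forall>x\<in>U. f x = g x) \<Longrightarrow> Ck n U f \<Longrightarrow> Ck n U g"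
proof (induction n)
  case 0 then show ?case using continuous_on_cong by force
next
  case (Suc n)
  have d: "g differentiable (at x)" and fe: "frechet_derivative g (at x) = frechet_derivative f (at x)"
    if "x \<in> U" for x
  proof -
    from Suc.prems that have "f differentiable (at x)" by simp
    then obtain D where D: "(f has_derivative D) (at x)" by (auto simp: differentiable_def)
    then have "(g has_derivative D) (at x)"
      using has_derivative_transform_within_open[OF D assms that] Suc.prems(1) by auto
    then show "g differentiable (at x)" "frechet_derivative g (at x) = frechet_derivative f (at x)"
      using D frechet_derivative_at by (metis differentiable_def)+
  qed
  have "Ck n U (\<lambda>x. frechet_derivative g (at x) v)" for v
    using Suc.prems fe Suc.IH[of "\<lambda>x. frechet_derivative f (at x) v" "\<lambda>x. frechet_derivative g (at x) v"]
    by auto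
  then show ?case using d by simp
qed

lemma fam_smooth:
  assumes "open U"
    and H: "\<And>f. P f \<Longrightarrow> \<forall>x\<in>U. \<exists>D. (f has_derivative D) (at x)"
    and H2: "\<And>f v. P f \<Longrightarrow> \<exists>g. P g \<and> (\<forall>x\<in>U. frechet_derivative f (at x) v = g x)"
    and "P f"
  shows "smooth_on U f"
proof -
  have "\<forall>f. P f \<longrightarrow> Ck n U f" for n
  proof (induction n)
    case 0
    show ?case
    proof (intro allI impI)
      fix f assume "P f"
      then have "\<forall>x\<in>U. isCont f x" using H has_derivative_continuous by blast
      then show "Ck 0 U f" by (simp add: continuous_at_imp_continuous_on)
    qed
  next
    case (Suc n)
    show ?case
    proof (intro allI impI)
      fix f assume "P f"
      have "\<forall>x\<in>U. f differentiable (at x)" using H[OF \<open>P f\<close>] by (auto simp: differentiable_def)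
      moreover have "Ck n U (\<lambda>x. frechet_derivative f (at x) v)" for v
      proof -
        obtain g where "P g" "\<forall>x\<in>U. frechet_derivative f (at x) v = g x" using H2[OF \<open>P f\<close>] by blast
        then show ?thesis using Suc.IH Ck_cong[OF assms(1), of g] by auto
      qed
      ultimately show "Ck (Suc n) U f" by simp
    qed
  qed
  then show ?thesis using assms(4) by (simp add: smooth_on_def)
qed

lemma DERIV_ln_abs_shift:
  fixes m r :: real assumes "r \<noteq> m"
  shows "DERIV (\<lambda>r. ln \<bar>r - m\<bar>) r :> 1 / (r - m)"
proof (cases "r > m")
  case True
  have "DERIV (\<lambda>r. ln (r - m)) r :> 1 / (r - m)"
    using True by (auto intro!: derivative_eq_intros)
  then show ?thesis
    by (rule has_field_derivative_transform_within_open[where S="{m<..}"]) (use True in auto)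
next
  case False
  then have F: "r < m" using assms by auto
  have "DERIV (\<lambda>r. ln (m - r)) r :> 1 / (r - m)"
    using F by (auto intro!: derivative_eq_intros simp: field_simps)
  then show ?thesis
    by (rule has_field_derivative_transform_within_open[where S="{..<m}"]) (use F in auto)
qed

definition hf :: "real \<Rightarrow> real \<Rightarrow> real \<Rightarrow> real poly \<Rightarrow> real \<Rightarrow> real" where
  "hf m a e q r = a * r + e * ln \<bar>r - m\<bar> + poly q (1 / (r - m))"

definition hdp :: "real \<Rightarrow> real \<Rightarrow> real poly \<Rightarrow> real poly" where
  "hdp a e q = [:a, e:] + pderiv q * [:0, 0, -1:]"

lemma DERIV_hf:
  assumes "r \<noteq> m"
  shows "DERIV (hf m a e q) r :> poly (hdp a e q) (1 / (r - m))"
proof -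
  have w: "DERIV (\<lambda>r. 1 / (r - m)) r :> - (1 / (r - m))\<^sup>2"
    using assms by (auto intro!: derivative_eq_intros simp: field_simps power2_eq_square)
  have p: "DERIV (\<lambda>r. poly q (1 / (r - m))) r :> poly (pderiv q) (1 / (r - m)) * (- (1 / (r - m))\<^sup>2)"
    using DERIV_chain2[OF poly_DERIV w] by simp
  have aa: "((*) a has_real_derivative a) (at r)"
    using DERIV_cmult[OF DERIV_ident, where c=a] by simp
  have "DERIV (hf m a e q) r :> a + e * (1 / (r - m)) + poly (pderiv q) (1 / (r - m)) * (- (1 / (r - m))\<^sup>2)"
    unfolding hf_def
    by (intro derivative_intros DERIV_ln_abs_shift[OF assms] p DERIV_cmult_right DERIV_cmult[OF DERIV_ln_abs_shift[OF assms]] aa)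
  then show ?thesis by (simp add: hdp_def power2_eq_square algebra_simps)
qed

lemma G_deriv:
  assumes "DERIV h1 (rad p) :> d1" "DERIV h2 (rad p) :> d2"
  shows "((\<lambda>q::pt. (a * fst q + h1 (rad q), h2 (rad q), c + b *\<^sub>R ang q)) has_derivative
          (\<lambda>X. (a * fst X + d1 * rad X, d2 * rad X, b *\<^sub>R ang X))) (at p)"
proof -
  have r: "(rad has_derivative rad) (at p)" unfolding rad_def
    by (auto intro!: derivative_eq_intros)
  have a: "(ang has_derivative ang) (at p)" unfolding ang_def
    by (auto intro!: derivative_eq_intros)
  have c1: "((\<lambda>q. h1 (rad q)) has_derivative (\<lambda>X. d1 * rad X)) (at p)"
    using has_derivative_compose[OF r assms(1)[unfolded has_field_derivative_def]] by (simp add: mult.commute)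
  have c2: "((\<lambda>q. h2 (rad q)) has_derivative (\<lambda>X. d2 * rad X)) (at p)"
    using has_derivative_compose[OF r assms(2)[unfolded has_field_derivative_def]] by (simp add: mult.commute)
  have c3: "((\<lambda>x. c + b *\<^sub>R ang x) has_derivative (\<lambda>h. b *\<^sub>R ang h)) (at p)"
    using has_derivative_add[OF has_derivative_const[of c] has_derivative_scaleR_right[OF a, of b]] by simp
  show ?thesis
    by (intro has_derivative_Pair c3 has_derivative_add has_derivative_mult_right has_derivative_fst
        has_derivative_ident c1 c2 has_derivative_const has_derivative_scaleR_right a) 
qed

definition Qf :: "real \<Rightarrow> real \<Rightarrow> real \<Rightarrow> real \<Rightarrow> real poly \<Rightarrow> real \<Rightarrow> real \<Rightarrow> real poly \<Rightarrow> real^3 \<Rightarrow> real \<Rightarrow> pt \<Rightarrow> pt" where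
  "Qf m a a1 e1 p1 a2 e2 p2 c b = (\<lambda>q. (a * fst q + hf m a1 e1 p1 (rad q), hf m a2 e2 p2 (rad q), c + b *\<^sub>R ang q))"

lemma open_rad_neq: "open {q::pt. rad q \<noteq> m}"
  unfolding rad_def by (intro open_Collect_neq continuous_intros)

lemma Qf_deriv:
  assumes "rad p \<noteq> m"
  shows "(Qf m a a1 e1 p1 a2 e2 p2 c b has_derivative
     (\<lambda>X. (a * fst X + poly (hdp a1 e1 p1) (1 / (rad p - m)) * rad X,
            poly (hdp a2 e2 p2) (1 / (rad p - m)) * rad X, b *\<^sub>R ang X))) (at p)"
  unfolding Qf_def by (intro G_deriv DERIV_hf assms)

lemma Qf_smooth: "smooth_on {q. rad q \<noteq> m} (Qf m a a1 e1 p1 a2 e2 p2 c b)"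
proof (rule fam_smooth[OF open_rad_neq, where P="\<lambda>f. \<exists>a a1 e1 p1 a2 e2 p2 c b. f = Qf m a a1 e1 p1 a2 e2 p2 c b"])
  fix f assume "\<exists>a a1 e1 p1 a2 e2 p2 c b. f = Qf m a a1 e1 p1 a2 e2 p2 c b"
  then show "\<forall>x\<in>{q. rad q \<noteq> m}. \<exists>D. (f has_derivative D) (at x)"
    using Qf_deriv by blast
next
  fix f v assume "\<exists>a a1 e1 p1 a2 e2 p2 c b. f = Qf m a a1 e1 p1 a2 e2 p2 c b"
  then obtain a a1 e1 p1 a2 e2 p2 c b where f: "f = Qf m a a1 e1 p1 a2 e2 p2 c b" by blast
  let ?g = "Qf m 0 0 0 (smult (rad v) (hdp a1 e1 p1) + [:a * fst v:]) 0 0 (smult (rad v) (hdp a2 e2 p2)) (b *\<^sub>R ang v) 0"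
  have "\<forall>x\<in>{q. rad q \<noteq> m}. frechet_derivative f (at x) v = ?g x"
  proof
    fix x assume "x \<in> {q. rad q \<noteq> m}"
    then have rx: "rad x \<noteq> m" by simp
    have "frechet_derivative f (at x) = (\<lambda>v. (a * fst v + poly (hdp a1 e1 p1) (1 / (rad x - m)) * rad v,
            poly (hdp a2 e2 p2) (1 / (rad x - m)) * rad v, b *\<^sub>R ang v))"
      unfolding f by (rule frechet_derivative_at[OF Qf_deriv[OF rx], symmetric])
    then show "frechet_derivative f (at x) v = ?g x"
      by (simp add: Qf_def hf_def mult.commute)
  qed
  then show "\<exists>g. (\<exists>a a1 e1 p1 a2 e2 p2 c b. g = Qf m a a1 e1 p1 a2 e2 p2 c b) \<and>
       (\<forall>x\<in>{q. rad q \<noteq> m}. frechet_derivative f (at x) v = g x)" by blast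
qed blast

lemma diffeo_invol:
  assumes "\<forall>x\<in>S. f x \<in> T" "\<forall>y\<in>T. f y \<in> S" "\<forall>x\<in>S. f (f x) = x" "\<forall>y\<in>T. f (f y) = y"
    and "open U" "S \<subseteq> U" "T \<subseteq> U" "smooth_on U G" "\<forall>x\<in>S \<union> T. G x = f x"
  shows "diffeo S T f"
proof -
  have b: "bij_betw f S T"
    by (rule bij_betw_byWitness[where f'=f]) (use assms(1-4) in auto)
  have i: "inv_into S f y = f y" if "y \<in> T" for y
    using b assms(2,4) that by (metis bij_betw_def inv_into_f_eq)
  show ?thesis unfolding diffeo_def smooth_map_on_def
    using assms b i by (metis Un_iff)
qed

lemma G_deriv1:
  assumes "DERIV h1 (rad p) :> d1" "DERIV h2 (rad p) :> d2"
  shows "((\<lambda>q::pt. (fst q + h1 (rad q), h2 (rad q), ang q)) has_derivative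
          (\<lambda>X. (fst X + d1 * rad X, d2 * rad X, ang X))) (at p)"
  using G_deriv[OF assms, of 1 0 1] by simp

definition phi :: "real \<Rightarrow> real \<Rightarrow> real" where "phi M r = r * M / (r - M)"

lemma phi_minus: "0 < M \<Longrightarrow> r \<noteq> M \<Longrightarrow> phi M r - M = M\<^sup>2 / (r - M)"
  by (simp add: phi_def field_simps power2_eq_square)

lemma phi_neq: "0 < M \<Longrightarrow> r \<noteq> M \<Longrightarrow> phi M r \<noteq> M"
  using phi_minus[of M r] by auto

lemma phi_phi: "0 < M \<Longrightarrow> r \<noteq> M \<Longrightarrow> phi M (phi M r) = r"
proof -
  assume a: "0 < M" "r \<noteq> M"
  have "phi M (phi M r) = phi M r * M / (M\<^sup>2 / (r - M))"
    using phi_minus[OF a] by (simp add: phi_def)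
  also have "\<dots> = r" using a by (simp add: phi_def field_simps power2_eq_square)
  finally show ?thesis .
qed

lemma rstar_phi: "0 < M \<Longrightarrow> r \<noteq> M \<Longrightarrow> rstar M (phi M r) = - rstar M r"
proof -
  assume a: "0 < M" "r \<noteq> M"
  have l: "ln (\<bar>phi M r - M\<bar> / M) = - ln (\<bar>r - M\<bar> / M)"
  proof -
    have "\<bar>phi M r - M\<bar> / M = M / \<bar>r - M\<bar>"
      using a by (simp add: phi_minus abs_divide power2_eq_square field_simps)
    then show ?thesis using a by (simp add: ln_div)
  qed
  have "M\<^sup>2 / (phi M r - M) = r - M" using a by (simp add: phi_minus)
  then show ?thesis unfolding rstar_def l using phi_minus[OF a] by (simp add: algebra_simps)
qed

lemma DERIV_phi: "0 < M \<Longrightarrow> r \<noteq> M \<Longrightarrow> DERIV (phi M) r :> - M\<^sup>2 / (r - M)\<^sup>2"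
  unfolding phi_def by (auto intro!: derivative_eq_intros simp: field_simps power2_eq_square)

lemma DERIV_rstar: "0 < M \<Longrightarrow> r \<noteq> M \<Longrightarrow> DERIV (rstar M) r :> r\<^sup>2 / (r - M)\<^sup>2"
proof -
  assume a: "0 < M" "r \<noteq> M"
  have d: "DERIV (\<lambda>r. r - M + 2 * M * (ln \<bar>r - M\<bar> - ln M) - M\<^sup>2 / (r - M)) r :>
      1 + 2 * M * (1 / (r - M)) + M\<^sup>2 / (r - M)\<^sup>2"
  proof -
    have d1: "DERIV (\<lambda>r. r - M) r :> 1" by (auto intro!: derivative_eq_intros)
    have d2: "DERIV (\<lambda>r. 2 * M * (ln \<bar>r - M\<bar> - ln M)) r :> 2 * M * (1 / (r - M) - 0)"
      by (intro DERIV_cmult DERIV_diff DERIV_ln_abs_shift a DERIV_const)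
    have d3: "DERIV (\<lambda>r. M\<^sup>2 / (r - M)) r :> - M\<^sup>2 / (r - M)\<^sup>2"
      using a by (auto intro!: derivative_eq_intros simp: field_simps power2_eq_square)
    show ?thesis using DERIV_diff[OF DERIV_add[OF d1 d2] d3] by simp
  qed
  have ne: "r - M \<noteq> 0" using a by simp
  have "1 + 2 * M * (1 / (r - M)) + M\<^sup>2 / (r - M)\<^sup>2 = r\<^sup>2 / (r - M)\<^sup>2"
    using ne by (simp add: divide_simps) (simp add: power2_eq_square algebra_simps)
  with d have d2: "DERIV (\<lambda>r. r - M + 2 * M * (ln \<bar>r - M\<bar> - ln M) - M\<^sup>2 / (r - M)) r :> r\<^sup>2 / (r - M)\<^sup>2"
    by simp
  show ?thesis
    by (rule has_field_derivative_transform_within_open[OF d2, where S="{x. x \<noteq> M}"])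
       (use a in \<open>auto simp: rstar_def ln_div open_Collect_neq\<close>)
qed

lemma rad_tup[simp]: "rad (a, b, c) = b" and ang_tup[simp]: "ang (a, b, c) = c"
  by (simp_all add: rad_def ang_def)

lemma Phi_Ext_eq: "Phi_Ext M p = (fst p, phi M (rad p), ang p)"
  by (simp add: Phi_Ext_def phi_def)

lemma phi_gt: "0 < M \<Longrightarrow> M < r \<Longrightarrow> M < phi M r"
proof -
  assume a: "0 < M" "M < r"
  then have "phi M r - M > 0" using phi_minus[of M r] by simp
  then show ?thesis by simp
qed

lemma Ext_maps: "0 < M \<Longrightarrow> p \<in> Ext M \<Longrightarrow> Phi_Ext M p \<in> Ext M"
  by (auto simp: Ext_def Phi_Ext_eq phi_gt)

lemma Ext_invol: "0 < M \<Longrightarrow> p \<in> Ext M \<Longrightarrow> Phi_Ext M (Phi_Ext M p) = p"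
  by (auto simp: Ext_def Phi_Ext_eq phi_phi rad_def ang_def)

lemma Ext_G: "0 < M \<Longrightarrow> rad x \<noteq> M \<Longrightarrow> Qf M 1 0 0 0 0 0 [:M, M\<^sup>2:] 0 1 x = Phi_Ext M x"
  by (simp add: Qf_def hf_def Phi_Ext_eq phi_def field_simps power2_eq_square)

lemma Ext_diffeo: "0 < M \<Longrightarrow> diffeo (Ext M) (Ext M) (Phi_Ext M)"
  apply (rule diffeo_invol[OF _ _ _ _ open_rad_neq _ _ Qf_smooth[of M 1 0 0 0 0 0 "[:M, M\<^sup>2:]" 0 1]])
  using Ext_maps Ext_invol Ext_G by (auto simp: Ext_def)

lemma Ext_deriv: "0 < M \<Longrightarrow> rad p \<noteq> M \<Longrightarrow>
   (Phi_Ext M has_derivative (\<lambda>X. (fst X, - M\<^sup>2 / (rad p - M)\<^sup>2 * rad X, ang X))) (at p)"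
  using G_deriv1[OF DERIV_const[of 0] DERIV_phi[of M "rad p"]]
  by (simp add: Phi_Ext_eq[abs_def])

lemma F_phi: "0 < M \<Longrightarrow> r \<noteq> M \<Longrightarrow> r \<noteq> 0 \<Longrightarrow> F M (phi M r) = M\<^sup>2 / r\<^sup>2"
  by (simp add: F_def phi_def field_simps power2_eq_square)

lemma F_r: "r \<noteq> 0 \<Longrightarrow> F M r = (r - M)\<^sup>2 / r\<^sup>2"
  by (simp add: F_def field_simps power2_eq_square)

lemma alg_e2: "(d::real) \<noteq> 0 \<Longrightarrow> r \<noteq> 0 \<Longrightarrow> M \<noteq> 0 \<Longrightarrow>
   (- M\<^sup>2 / d\<^sup>2) * (- M\<^sup>2 / d\<^sup>2) / (M\<^sup>2 / r\<^sup>2) = (M\<^sup>2 / d\<^sup>2) / (d\<^sup>2 / r\<^sup>2)"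
  by (simp add: field_simps power2_eq_square)

lemma Ext_pull: assumes "0 < M" "p \<in> Ext M"
  shows "pullback (Phi_Ext M) (g_Ext M) p X Y = M\<^sup>2 / (rad p - M)\<^sup>2 * g_Ext M p X Y"
proof -
  let ?r = "rad p"
  have r: "?r \<noteq> M" "?r \<noteq> 0" "?r - M \<noteq> 0" using assms by (auto simp: Ext_def)
  have fd: "frechet_derivative (Phi_Ext M) (at p) = (\<lambda>X. (fst X, - M\<^sup>2 / (rad p - M)\<^sup>2 * rad X, ang X))"
    using frechet_derivative_at[OF Ext_deriv[OF assms(1) r(1)]] by simp
  let ?k = "M\<^sup>2 / (?r - M)\<^sup>2"
  have e1: "F M (phi M ?r) = ?k * F M ?r" using r assms(1) by (simp add: F_phi F_r)
  have e2: "(- M\<^sup>2 / (?r - M)\<^sup>2) * (- M\<^sup>2 / (?r - M)\<^sup>2) / F M (phi M ?r) = ?k / F M ?r"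
    using r assms(1) alg_e2[of "?r - M" ?r M] by (simp add: F_phi F_r)
  have e3: "(phi M ?r)\<^sup>2 = ?k * ?r\<^sup>2"
    using r by (simp add: phi_def field_simps power2_eq_square)
  have "pullback (Phi_Ext M) (g_Ext M) p X Y = F M (phi M ?r) * fst X * fst Y
      - ((- M\<^sup>2 / (?r - M)\<^sup>2) * (- M\<^sup>2 / (?r - M)\<^sup>2) / F M (phi M ?r)) * (rad X * rad Y)
      - (phi M ?r)\<^sup>2 * (ang X \<bullet> ang Y)"
    unfolding pullback_def fd g_Ext_def by (simp add: Phi_Ext_eq)
  also have "\<dots> = ?k * F M ?r * fst X * fst Y - (?k / F M ?r) * (rad X * rad Y) - (?k * ?r\<^sup>2) * (ang X \<bullet> ang Y)"
    by (subst e2) (simp only: e1 e3)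
  also have "\<dots> = ?k * g_Ext M p X Y"
    unfolding g_Ext_def by (simp add: algebra_simps)
  finally show ?thesis .
qed

lemma Ext_pull_resc: assumes "0 < M" "p \<in> Ext M"
  shows "pullback (Phi_Ext M) (rescale (g_Ext M)) p X Y = rescale (g_Ext M) p X Y"
proof -
  let ?r = "rad p"
  have r: "?r \<noteq> M" "?r \<noteq> 0" "?r - M \<noteq> 0" using assms by (auto simp: Ext_def)
  let ?k = "M\<^sup>2 / (?r - M)\<^sup>2"
  have 1: "pullback (Phi_Ext M) (rescale (g_Ext M)) p X Y = pullback (Phi_Ext M) (g_Ext M) p X Y / (phi M ?r)\<^sup>2"
    by (simp add: pullback_def rescale_def Phi_Ext_eq)
  have 2: "(phi M ?r)\<^sup>2 = ?k * ?r\<^sup>2"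
    using r by (simp add: phi_def field_simps power2_eq_square)
  have k: "?k \<noteq> 0" using r assms(1) by simp
  show ?thesis unfolding 1 2 Ext_pull[OF assms] rescale_def using k by simp
qed

lemma Ext_fix: "p \<in> Ext M \<Longrightarrow> 0 < M \<Longrightarrow> rad p = 2 * M \<Longrightarrow> Phi_Ext M p = p"
  by (cases p) (simp add: Phi_Ext_def rad_def ang_def)

lemma inv_phi: "0 < M \<Longrightarrow> r \<noteq> M \<Longrightarrow> r \<noteq> 0 \<Longrightarrow> 1 / phi M r = (1 - M * (1 / r)) / M"
  by (simp add: phi_def field_simps)

lemma Ext_in_out: "0 < M \<Longrightarrow> p \<in> Ext M \<Longrightarrow> to_in M (Phi_Ext M p) = Phi_hat M (to_out M p)"
  by (auto simp: Ext_def to_in_def to_out_def Phi_hat_def Phi_Ext_eq rstar_phi inv_phi)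

lemma Ext_out_in: "0 < M \<Longrightarrow> p \<in> Ext M \<Longrightarrow> to_out M (Phi_Ext M p) = Phi_hat M (to_in M p)"
  by (auto simp: Ext_def to_in_def to_out_def Phi_hat_def Phi_Ext_eq rstar_phi inv_phi)

lemma Phi_hat_invol: "0 < M \<Longrightarrow> Phi_hat M (Phi_hat M p) = p"
  by (simp add: Phi_hat_def rad_def ang_def field_simps)

lemma Phi_hat_G: "0 < M \<Longrightarrow> Qf (-1) 1 0 0 0 (-1) 0 [:1/M:] 0 1 x = Phi_hat M x"
  by (simp add: Qf_def hf_def Phi_hat_def field_simps)

lemma Cpt_diffeo: "0 < M \<Longrightarrow> diffeo (Cpt M) (Cpt M) (Phi_hat M)"
  apply (rule diffeo_invol[OF _ _ _ _ open_rad_neq _ _ Qf_smooth[of "-1" 1 0 0 0 "-1" 0 "[:1/M:]" 0 1]])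
  using Phi_hat_invol Phi_hat_G by (auto simp: Cpt_def Phi_hat_def field_simps)

lemma Phi_hat_deriv: "0 < M \<Longrightarrow>
   (Phi_hat M has_derivative (\<lambda>X. (fst X, - rad X, ang X))) (at p)"
proof -
  assume M: "0 < M"
  have d: "DERIV (\<lambda>R. (1 - M * R) / M) (rad p) :> -1"
    using M by (auto intro!: derivative_eq_intros)
  show ?thesis
    using G_deriv1[OF DERIV_const[of 0] d] by (simp add: Phi_hat_def[abs_def])
qed

lemma Cpt_pull1: assumes "0 < M"
  shows "pullback (Phi_hat M) (ghat_in M) p X Y = ghat_out M p X Y"
proof -
  have fd: "frechet_derivative (Phi_hat M) (at p) = (\<lambda>X. (fst X, - rad X, ang X))"
    using frechet_derivative_at[OF Phi_hat_deriv[OF assms]] by simp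
  have e: "((1 - M * rad p) / M)\<^sup>2 * (M * rad p)\<^sup>2 = (rad p)\<^sup>2 * (1 - M * rad p)\<^sup>2"
    using assms by (simp add: field_simps power2_eq_square)
  have e2: "1 - M * ((1 - M * rad p) / M) = M * rad p" using assms by (simp add: field_simps)
  show ?thesis unfolding pullback_def fd ghat_in_def ghat_out_def
    using assms by (simp add: Phi_hat_def e e2 del: power_mult_distrib)
qed

lemma Cpt_pull2: assumes "0 < M"
  shows "pullback (Phi_hat M) (ghat_out M) p X Y = ghat_in M p X Y"
proof -
  have fd: "frechet_derivative (Phi_hat M) (at p) = (\<lambda>X. (fst X, - rad X, ang X))"
    using frechet_derivative_at[OF Phi_hat_deriv[OF assms]] by simp
  have e: "((1 - M * rad p) / M)\<^sup>2 * (M * rad p)\<^sup>2 = (rad p)\<^sup>2 * (1 - M * rad p)\<^sup>2"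
    using assms by (simp add: field_simps power2_eq_square)
  have e2: "1 - M * ((1 - M * rad p) / M) = M * rad p" using assms by (simp add: field_simps)
  show ?thesis unfolding pullback_def fd ghat_in_def ghat_out_def
    using assms by (simp add: Phi_hat_def e e2 del: power_mult_distrib)
qed

lemma bij_hat: assumes "0 < M" "\<forall>p\<in>A. Phi_hat M p \<in> B" "\<forall>p\<in>B. Phi_hat M p \<in> A"
  shows "bij_betw (Phi_hat M) A B"
  by (rule bij_betw_byWitness[where f'="Phi_hat M"]) (use assms Phi_hat_invol in auto)

lemma bij_hats: "0 < M \<Longrightarrow>
   bij_betw (Phi_hat M) (scri_plus M) (hor_plus M)
   \<and> bij_betw (Phi_hat M) (hor_plus M) (scri_plus M)
   \<and> bij_betw (Phi_hat M) (hor_minus M) (scri_minus M)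
   \<and> bij_betw (Phi_hat M) (scri_minus M) (hor_minus M)"
  by (intro conjI bij_hat) (auto simp: scri_plus_def hor_plus_def scri_minus_def hor_minus_def Phi_hat_def field_simps)

lemma Phi_Int_eq: "Phi_Int M p = (fst p + 2 * rstar M (rad p), phi M (rad p), ang p)"
  by (simp add: Phi_Int_def phi_def)

lemma Int_maps1: "0 < M \<Longrightarrow> p \<in> IntR M \<Longrightarrow> Phi_Int M p \<in> NR"
  by (auto simp: IntR_def NR_def Phi_Int_eq phi_def intro!: divide_pos_neg)

lemma Int_maps2: assumes "0 < M" "p \<in> NR" shows "Phi_Int M p \<in> IntR M"
proof -
  have r: "rad p < 0" "ang p \<in> S2" using assms by (auto simp: NR_def)
  have "0 < phi M (rad p)" using r assms(1) by (simp add: phi_def divide_neg_neg mult_neg_pos)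
  moreover have "phi M (rad p) - M < 0" using r assms(1) by (simp add: phi_minus divide_pos_neg)
  ultimately show ?thesis using r by (simp add: IntR_def Phi_Int_eq)
qed

lemma Int_invol: "0 < M \<Longrightarrow> rad p \<noteq> M \<Longrightarrow> Phi_Int M (Phi_Int M p) = p"
  by (simp add: Phi_Int_eq phi_phi rstar_phi rad_def ang_def)

lemma Int_G: "0 < M \<Longrightarrow> rad x \<noteq> M \<Longrightarrow>
   Qf M 1 2 (4 * M) [:- 2 * M - 4 * M * ln M, - 2 * M\<^sup>2:] 0 0 [:M, M\<^sup>2:] 0 1 x = Phi_Int M x"
  by (simp add: Qf_def hf_def Phi_Int_eq phi_def rstar_def ln_div field_simps power2_eq_square)

lemma Int_diffeo: "0 < M \<Longrightarrow> diffeo (IntR M) NR (Phi_Int M)"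
  apply (rule diffeo_invol[OF _ _ _ _ open_rad_neq _ _
          Qf_smooth[of M 1 2 "4 * M" "[:- 2 * M - 4 * M * ln M, - 2 * M\<^sup>2:]" 0 0 "[:M, M\<^sup>2:]" 0 1]])
  using Int_maps1 Int_maps2 Int_invol Int_G by (auto simp: IntR_def NR_def)

lemma Int_deriv: "0 < M \<Longrightarrow> rad p \<noteq> M \<Longrightarrow>
   (Phi_Int M has_derivative (\<lambda>X. (fst X + 2 * ((rad p)\<^sup>2 / (rad p - M)\<^sup>2) * rad X,
       - M\<^sup>2 / (rad p - M)\<^sup>2 * rad X, ang X))) (at p)"
  using G_deriv1[OF DERIV_cmult[OF DERIV_rstar[of M "rad p"], of 2] DERIV_phi[of M "rad p"]]
  by (simp add: Phi_Int_eq[abs_def])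

lemma alg_int: "(Fr::real) \<noteq> 0 \<Longrightarrow>
  (k*Fr)*(X0 + (2/Fr)*X1)*(Y0 + (2/Fr)*Y1) + ((X0 + (2/Fr)*X1)*(-k*Y1) + (-k*X1)*(Y0+(2/Fr)*Y1)) - (k*r2)*Z
  = k*(Fr*X0*Y0 + (X0*Y1 + X1*Y0) - r2*Z)"
  by (simp add: field_simps)

lemma Int_pull: assumes "0 < M" "p \<in> IntR M"
  shows "pullback (Phi_Int M) (g_EF M) p X Y = M\<^sup>2 / (rad p - M)\<^sup>2 * g_EF M p X Y"
proof -
  let ?r = "rad p"
  have r: "?r \<noteq> M" "?r \<noteq> 0" "?r - M \<noteq> 0" using assms by (auto simp: IntR_def)
  let ?k = "M\<^sup>2 / (?r - M)\<^sup>2"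
  have fd: "frechet_derivative (Phi_Int M) (at p) = (\<lambda>X. (fst X + 2 * ((rad p)\<^sup>2 / (rad p - M)\<^sup>2) * rad X,
       - M\<^sup>2 / (rad p - M)\<^sup>2 * rad X, ang X))"
    using frechet_derivative_at[OF Int_deriv[OF assms(1) r(1)]] by simp
  have e1: "F M (phi M ?r) = ?k * F M ?r" using r assms(1) by (simp add: F_phi F_r)
  have e2: "2 * (?r\<^sup>2 / (?r - M)\<^sup>2) = 2 / F M ?r" using r by (simp add: F_r)
  have e3: "(phi M ?r)\<^sup>2 = ?k * ?r\<^sup>2"
    using r by (simp add: phi_def field_simps power2_eq_square)
  have Fne: "F M ?r \<noteq> 0" using r by (simp add: F_r)
  have "pullback (Phi_Int M) (g_EF M) p X Y =
     (?k * F M ?r) * (fst X + (2 / F M ?r) * rad X) * (fst Y + (2 / F M ?r) * rad Y)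
     + ((fst X + (2 / F M ?r) * rad X) * (- ?k * rad Y) + (- ?k * rad X) * (fst Y + (2 / F M ?r) * rad Y))
     - (?k * ?r\<^sup>2) * (ang X \<bullet> ang Y)"
    unfolding pullback_def fd g_EF_def Phi_Int_eq rad_tup ang_tup fst_conv e2 e1 e3
    by (simp add: algebra_simps)
  also have "\<dots> = ?k * g_EF M p X Y"
    unfolding alg_int[OF Fne] g_EF_def ..
  finally show ?thesis .
qed

lemma Int_pull_resc: assumes "0 < M" "p \<in> IntR M"
  shows "pullback (Phi_Int M) (rescale (g_EF M)) p X Y = rescale (g_EF M) p X Y"
proof -
  let ?r = "rad p"
  have r: "?r \<noteq> M" "?r \<noteq> 0" "?r - M \<noteq> 0" using assms by (auto simp: IntR_def)
  let ?k = "M\<^sup>2 / (?r - M)\<^sup>2"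
  have 1: "pullback (Phi_Int M) (rescale (g_EF M)) p X Y = pullback (Phi_Int M) (g_EF M) p X Y / (phi M ?r)\<^sup>2"
    by (simp add: pullback_def rescale_def Phi_Int_eq)
  have 2: "(phi M ?r)\<^sup>2 = ?k * ?r\<^sup>2"
    using r by (simp add: phi_def field_simps power2_eq_square)
  have k: "?k \<noteq> 0" using r assms(1) by simp
  show ?thesis unfolding 1 2 Int_pull[OF assms] rescale_def using k by simp
qed

lemma flip_G: "Qf 0 1 0 0 0 (-1) 0 0 0 1 x = flip x"
  by (simp add: Qf_def hf_def flip_def)

lemma flip_invol: "flip (flip p) = p" by (simp add: flip_def rad_def ang_def)

lemma flip_diffeo: "diffeo Npos NR flip"
  apply (rule diffeo_invol[OF _ _ _ _ open_rad_neq _ _ Qf_smooth[of 0 1 0 0 0 "-1" 0 0 0 1]])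
  using flip_invol flip_G by (auto simp: Npos_def NR_def flip_def)

lemma flip_deriv: "(flip has_derivative (\<lambda>X. (fst X, - rad X, ang X))) (at p)"
  using G_deriv1[OF DERIV_const[of 0] DERIV_minus[OF DERIV_ident]] by (simp add: flip_def[abs_def])

lemma flip_pull: assumes "p \<in> Npos"
  shows "pullback flip (g_EF M) p X Y = g_Nflip M p X Y"
proof -
  have fd: "frechet_derivative flip (at p) = (\<lambda>X. (fst X, - rad X, ang X))"
    using frechet_derivative_at[OF flip_deriv] by simp
  show ?thesis unfolding pullback_def fd g_EF_def g_Nflip_def
    by (simp add: flip_def F_def algebra_simps)
qed

lemma Nflip_RN: assumes "p \<in> Npos" "q\<^sup>2 = M\<^sup>2" shows "g_Nflip M p X Y = g_RN_in (- M) q p X Y"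
proof -
  have r: "rad p \<noteq> 0" using assms by (auto simp: Npos_def)
  have "(1 + M / rad p)\<^sup>2 = 1 - 2 * (- M) / rad p + q\<^sup>2 / (rad p)\<^sup>2"
    using r assms(2) by (simp add: field_simps power2_eq_square)
  then show ?thesis unfolding g_Nflip_def g_RN_in_def by simp
qed

lemma Int_lim: assumes "0 < M"
  shows "((\<lambda>r. - rad (Phi_Int M (u, r, \<omega>))) \<longlongrightarrow> 0) (at_right 0)
      \<and> filterlim (\<lambda>r. - rad (Phi_Int M (u, r, \<omega>))) at_top (at_left M)"
proof
  have "((\<lambda>r. - (r * M / (r - M))) \<longlongrightarrow> - (0 * M / (0 - M))) (at_right 0)"
    using assms by (intro tendsto_intros) auto
  then show "((\<lambda>r. - rad (Phi_Int M (u, r, \<omega>))) \<longlongrightarrow> 0) (at_right 0)"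
    by (simp add: Phi_Int_def)
  have e: "(\<lambda>r. - rad (Phi_Int M (u, r, \<omega>))) = (\<lambda>r. (r * M) / (M - r))"
    by (simp add: Phi_Int_def fun_eq_iff minus_divide_right)
  have "filterlim (\<lambda>r. (r * M) / (M - r)) at_top (at_left M)"
  proof (rule LIM_at_top_divide)
    show "((\<lambda>r. r * M) \<longlongrightarrow> M * M) (at_left M)" by (intro tendsto_intros)
    show "0 < M * M" using assms by simp
    have "((\<lambda>r. M - r) \<longlongrightarrow> M - M) (at_left M)" by (intro tendsto_intros)
    then show "((\<lambda>r. M - r) \<longlongrightarrow> 0) (at_left M)" by simp
    show "eventually (\<lambda>r. 0 < M - r) (at_left M)"
      by (simp add: eventually_at_left_field) (use assms in \<open>auto intro: exI[of _ "M - 1"]\<close>)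
  qed
  then show "filterlim (\<lambda>r. - rad (Phi_Int M (u, r, \<omega>))) at_top (at_left M)" unfolding e .
qed


lemma NR_rad: "p \<in> NR \<Longrightarrow> 0 < - rad p" by (simp add: NR_def)

theorem theorem1:
  fixes M :: real
  assumes "0 < M"
  shows
    \<comment> \<open>(i) exterior\<close>
    "diffeo (Ext M) (Ext M) (Phi_Ext M)
   \<and> (\<forall>p\<in>Ext M. Phi_Ext M (Phi_Ext M p) = p)
   \<and> metric_eq_on (Ext M) (pullback (Phi_Ext M) (g_Ext M))
                   (\<lambda>p X Y. M\<^sup>2 / (rad p - M)\<^sup>2 * g_Ext M p X Y)
   \<and> metric_eq_on (Ext M) (pullback (Phi_Ext M) (rescale (g_Ext M))) (rescale (g_Ext M))
   \<and> (\<forall>p\<in>Ext M. rad p = 2 * M \<longrightarrow> Phi_Ext M p = p)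
   \<and> (\<forall>p\<in>Ext M. to_in M (Phi_Ext M p) = Phi_hat M (to_out M p))
   \<and> (\<forall>p\<in>Ext M. to_out M (Phi_Ext M p) = Phi_hat M (to_in M p))
   \<and> diffeo (Cpt M) (Cpt M) (Phi_hat M)
   \<and> metric_eq_on (Cpt M) (pullback (Phi_hat M) (ghat_in M)) (ghat_out M)
   \<and> metric_eq_on (Cpt M) (pullback (Phi_hat M) (ghat_out M)) (ghat_in M)
   \<and> bij_betw (Phi_hat M) (scri_plus M) (hor_plus M)
   \<and> bij_betw (Phi_hat M) (hor_plus M) (scri_plus M)
   \<and> bij_betw (Phi_hat M) (hor_minus M) (scri_minus M)
   \<and> bij_betw (Phi_hat M) (scri_minus M) (hor_minus M)
    \<comment> \<open>(ii) interior\<close>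
   \<and> diffeo (IntR M) NR (Phi_Int M)
   \<and> metric_eq_on (IntR M) (pullback (Phi_Int M) (g_N M))
                   (\<lambda>p X Y. M\<^sup>2 / (rad p - M)\<^sup>2 * g_Int M p X Y)
   \<and> metric_eq_on (IntR M) (pullback (Phi_Int M) (rescale (g_N M))) (rescale (g_Int M))
   \<and> diffeo Npos NR flip
   \<and> metric_eq_on Npos (pullback flip (g_N M)) (g_Nflip M)
   \<and> metric_eq_on Npos (g_Nflip M) (g_RN_in (- M) M)
   \<and> metric_eq_on Npos (g_Nflip M) (g_RN_in (- M) (- M))
   \<and> (\<forall>p\<in>IntR M. 0 < - rad (Phi_Int M p))
   \<and> (\<forall>u \<omega>. \<omega> \<in> S2 \<longrightarrow>
        ((\<lambda>r. - rad (Phi_Int M (u, r, \<omega>))) \<longlongrightarrow> 0) (at_right 0)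
      \<and> filterlim (\<lambda>r. - rad (Phi_Int M (u, r, \<omega>))) at_top (at_left M))"
proof -
  have M: "0 < M" by (rule assms)
  show ?thesis
    unfolding metric_eq_on_def
    using M Ext_diffeo Ext_invol Ext_pull Ext_pull_resc Ext_fix Ext_in_out Ext_out_in Cpt_diffeo
      Cpt_pull1 Cpt_pull2 bij_hats Int_diffeo Int_pull Int_pull_resc flip_diffeo flip_pull
      Nflip_RN[of _ M] Nflip_RN[of _ "- M"] Int_lim
      Int_maps1[THEN NR_rad]
    by simp
qed

end
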